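(* For every $\varepsilon>0$, positive integer $t$, threshold $\theta\in\mathbb{R}$ and finite sequence $Q$ of counting queries, ImprovedSVT$(\cdot,Q,\theta,\lambda,t)$ (described below) satisfies $\varepsilon$-differential privacy whenever $\lambda\ge 2/\varepsilon$.
   Context: $\mathrm{Lap}(\lambda)$ is the Laplace distribution with density $\frac{1}{2\lambda}e^{-|y|/\lambda}$. A dataset is a finite multiset of tuples; two datasets are neighboring if one is obtained by inserting one tuple into the other. A counting query $q$ maps a dataset to the number of its tuples satisfying some predicate (so if $D$ is $D'$ plus one tuple then $q(D')\le q(D)\le q(D')+1$). ImprovedSVT$(D,Q=(q_1,q_2,\dots),\theta,\lambda,t)$: set $cnt=0$; draw $\hat\theta=\theta+\mathrm{Lap}(\lambda)$ once; for $i=1,2,\dots$: draw $\hat q_i(D)=q_i(D)+\mathrm{Lap}(t\lambda)$ (all noises independent); if $\hat q_i(D)>\hat\theta$, output $o_i=1$, increase $cnt$ by one, and stop if $cnt\ge t$; otherwise output $o_i=0$. The algorithm also stops when $Q$ is exhausted. The output is the sequence $(o_1,o_2,\dots)$ produced. An algorithm $\mathcal{A}$ is $\varepsilon$-differentially private if for all neighboring $D,D'$ and all outputs $O$, $\Pr[\mathcal{A}(D)=O]\le e^{\varepsilon}\Pr[\mathcal{A}(D')=O]$. *)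

theory Defs
  imports "HOL-Probability.Probability" "HOL-Library.Multiset"
begin

definition laplace :: "real \<Rightarrow> real measure" where
  "laplace b = density lborel (\<lambda>y. ennreal (exp (- \<bar>y\<bar> / b) / (2 * b)))"

definition count_query :: "('a \<Rightarrow> bool) \<Rightarrow> 'a multiset \<Rightarrow> nat" where
  "count_query P D = size (filter_mset P D)"

definition neighboring :: "'a multiset \<Rightarrow> 'a multiset \<Rightarrow> bool" where
  "neighboring D D' \<longleftrightarrow> (\<exists>x. D = add_mset x D') \<or> (\<exists>x. D' = add_mset x D)"

text \<open>Deterministic part of ImprovedSVT: r = t - cnt remaining positive answers allowed,
  th = noisy threshold, list of noisy query answers.\<close>
fun svt_run :: "nat \<Rightarrow> real \<Rightarrow> real list \<Rightarrow> bool list" where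
  "svt_run r th [] = []"
| "svt_run r th (x # xs) =
     (if x > th then True # (if r \<le> 1 then [] else svt_run (r - 1) th xs)
      else False # svt_run r th xs)"

definition svt_noise :: "real \<Rightarrow> nat \<Rightarrow> nat \<Rightarrow> (real \<times> (nat \<Rightarrow> real)) measure" where
  "svt_noise lam t n = laplace lam \<Otimes>\<^sub>M (\<Pi>\<^sub>M i\<in>{..<n}. laplace (real t * lam))"

definition improved_svt_prob ::
  "'a multiset \<Rightarrow> ('a \<Rightarrow> bool) list \<Rightarrow> real \<Rightarrow> real \<Rightarrow> nat \<Rightarrow> bool list \<Rightarrow> real" where
  "improved_svt_prob D Q \<theta> lam t out =
     measure (svt_noise lam t (length Q))
       {\<omega> \<in> space (svt_noise lam t (length Q)).
          svt_run t (\<theta> + fst \<omega>)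
            (map (\<lambda>i. real (count_query (Q ! i) D) + snd \<omega> i) [0..<length Q]) = out}"

definition differentially_private ::
  "real \<Rightarrow> ('d \<Rightarrow> 'o \<Rightarrow> real) \<Rightarrow> ('d \<Rightarrow> 'd \<Rightarrow> bool) \<Rightarrow> bool" where
  "differentially_private \<epsilon> M nb \<longleftrightarrow>
     (\<forall>D D' out. nb D D' \<longrightarrow> M D out \<le> exp \<epsilon> * M D' out)"

end

theory Submission
  imports Defs
begin

fun svt_b :: "nat \<Rightarrow> bool list \<Rightarrow> bool list" where
  "svt_b r [] = []"
| "svt_b r (b # bs) = (if b then True # (if r \<le> 1 then [] else svt_b (r - 1) bs)
      else False # svt_b r bs)"

lemma svt_run_b: "svt_run r th xs = svt_b r (map (\<lambda>x. th < x) xs)"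
  by (induction r th xs rule: svt_run.induct) auto

lemma svt_b_prefix: "svt_b r bs = out \<Longrightarrow> length out \<le> length bs \<and> (\<forall>i<length out. out ! i = bs ! i)"
proof (induction r bs arbitrary: out rule: svt_b.induct)
  case (2 r b bs)
  then show ?case by (auto simp: nth_Cons split: if_splits nat.splits)
qed auto

lemma svt_b_agree: "length bs' = length bs \<Longrightarrow> (\<forall>i<length (svt_b r bs). bs' ! i = bs ! i) \<Longrightarrow> svt_b r bs' = svt_b r bs"
proof (induction r bs arbitrary: bs' rule: svt_b.induct)
  case (1 r)
  then show ?case by simp
next
  case (2 r b bs)
  then obtain b' cs where bs': "bs' = b' # cs" by (cases bs') auto
  have b': "b' = b" using spec[OF 2(4), of 0] bs' by (cases b) auto
  show ?case
  proof (cases b)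
    case True
    show ?thesis
    proof (cases "r \<le> 1")
      case True thus ?thesis using bs' b' \<open>b\<close> by simp
    next
      case False
      have "\<forall>i<length (svt_b (r-1) bs). cs ! i = bs ! i"
        using 2(4) bs' \<open>b\<close> False by (auto; metis Suc_mono nth_Cons_Suc length_Cons)
      then show ?thesis using 2(1)[OF \<open>b\<close> False, of cs] 2(3) bs' b' \<open>b\<close> False by simp
    qed
  next
    case False
    have "\<forall>i<length (svt_b r bs). cs ! i = bs ! i"
      using 2(4) bs' \<open>\<not>b\<close> by (auto; metis Suc_mono nth_Cons_Suc length_Cons)
    then show ?thesis using 2(2)[OF False, of cs] 2(3) bs' b' False by simp
  qed
qed

lemma svt_b_count: "r \<ge> 1 \<Longrightarrow> length (filter id (svt_b r bs)) \<le> r"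
proof (induction r bs rule: svt_b.induct)
  case (2 r b bs)
  show ?case
  proof (cases "b \<and> \<not> r \<le> 1")
    case True
    then have "length (filter id (svt_b (r - 1) bs)) \<le> r - 1" using 2 by (auto simp: id_def)
    then show ?thesis using True by (auto simp: id_def)
  next
    case False then show ?thesis using 2 by auto
  qed
qed auto


definition shiftok :: "'a measure \<Rightarrow> ('a \<Rightarrow> 'a) \<Rightarrow> ennreal \<Rightarrow> bool" where
  "shiftok M g c \<longleftrightarrow> g \<in> M \<rightarrow>\<^sub>M M \<and>
     (\<forall>h\<in>borel_measurable M. (\<integral>\<^sup>+x. h (g x) \<partial>M) \<le> c * (\<integral>\<^sup>+x. h x \<partial>M))"

lemma sets_laplace[simp, measurable_cong]: "sets (laplace b) = sets borel"
  unfolding laplace_def by simp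

lemma space_laplace[simp]: "space (laplace b) = UNIV"
  by (simp add: laplace_def)

lemma laplace_shift:
  assumes b: "b > 0"
  shows "shiftok (laplace b) (\<lambda>y. y + a) (ennreal (exp (\<bar>a\<bar> / b)))"
  unfolding shiftok_def
proof safe
  show "(\<lambda>y. y + a) \<in> laplace b \<rightarrow>\<^sub>M laplace b"
    using measurable_cong_sets[OF sets_laplace sets_laplace, of b b] by simp
  fix h :: "real \<Rightarrow> ennreal" assume h0: "h \<in> borel_measurable (laplace b)"
  then have h[measurable]: "h \<in> borel_measurable borel" using measurable_cong_sets[OF sets_laplace refl, of b] by simp
  define f where "f y = exp (- \<bar>y\<bar> / b) / (2 * b)" for y
  have fm[measurable]: "f \<in> borel_measurable borel" unfolding f_def by measurable
  have L: "laplace b = density lborel (\<lambda>y. ennreal (f y))" by (simp add: laplace_def f_def)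
  have "(\<integral>\<^sup>+x. h (x + a) \<partial>laplace b) = (\<integral>\<^sup>+x. ennreal (f x) * h (x + a) \<partial>lborel)"
    unfolding L by (subst nn_integral_density) auto
  also have "\<dots> = (\<integral>\<^sup>+u. ennreal (f (u - a)) * h u \<partial>lborel)"
    using nn_integral_real_affine[of "\<lambda>u. ennreal (f (u - a)) * h u" 1 a]
    by (simp add: add.commute)
  also have "\<dots> \<le> (\<integral>\<^sup>+u. ennreal (exp (\<bar>a\<bar> / b)) * (ennreal (f u) * h u) \<partial>lborel)"
  proof (rule nn_integral_mono)
    fix u
    have "f (u - a) \<le> exp (\<bar>a\<bar> / b) * f u"
    proof -
      have "\<bar>u\<bar> \<le> \<bar>u - a\<bar> + \<bar>a\<bar>" by linarith
      then have "- \<bar>u - a\<bar> / b \<le> \<bar>a\<bar> / b + - \<bar>u\<bar> / b"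
        using b by (simp add: field_simps)
      then have "exp (- \<bar>u - a\<bar> / b) \<le> exp (\<bar>a\<bar> / b) * exp (- \<bar>u\<bar> / b)"
        by (simp add: exp_add[symmetric])
      then show ?thesis unfolding f_def using b by (simp add: divide_right_mono)
    qed
    then have "ennreal (f (u - a)) \<le> ennreal (exp (\<bar>a\<bar> / b)) * ennreal (f u)"
    proof -
      have "0 \<le> f u" using b unfolding f_def by simp
      then have "ennreal (exp (\<bar>a\<bar> / b)) * ennreal (f u) = ennreal (exp (\<bar>a\<bar> / b) * f u)"
        by (simp add: ennreal_mult)
      then show ?thesis using \<open>f (u - a) \<le> exp (\<bar>a\<bar> / b) * f u\<close> by (simp add: ennreal_leI)
    qed
    then show "ennreal (f (u - a)) * h u \<le> ennreal (exp (\<bar>a\<bar> / b)) * (ennreal (f u) * h u)"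
      by (metis mult.assoc mult_right_mono zero_le)
  qed
  also have "\<dots> = ennreal (exp (\<bar>a\<bar> / b)) * (\<integral>\<^sup>+u. ennreal (f u) * h u \<partial>lborel)"
    by (rule nn_integral_cmult) measurable
  also have "(\<integral>\<^sup>+u. ennreal (f u) * h u \<partial>lborel) = (\<integral>\<^sup>+x. h x \<partial>laplace b)"
    unfolding L by (subst nn_integral_density) auto
  finally show "(\<integral>\<^sup>+x. h (x + a) \<partial>laplace b) \<le> ennreal (exp (\<bar>a\<bar> / b)) * (\<integral>\<^sup>+x. h x \<partial>laplace b)" .
qed


lemma laplace_finite:
  assumes b: "b > 0" shows "finite_measure (laplace b)"
proof
  define e where "e = exponential_density (1/b)"
  have em[measurable]: "e \<in> borel_measurable borel" unfolding e_def by simp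
  have e1: "(\<integral>\<^sup>+x. ennreal (e x) \<partial>lborel) = 1"
  proof -
    interpret prob_space "density lborel (exponential_density (1/b))"
      using b by (intro prob_space_exponential_density) simp
    have "emeasure (density lborel (exponential_density (1/b))) UNIV = 1"
      using emeasure_space_1 by simp
    then show ?thesis unfolding e_def by (simp add: emeasure_density)
  qed
  have e2: "(\<integral>\<^sup>+x. ennreal (e (- x)) \<partial>lborel) = 1"
    using nn_integral_real_affine[of "\<lambda>x. ennreal (e x)" "-1" 0] e1 by simp
  have "emeasure (laplace b) (space (laplace b)) = (\<integral>\<^sup>+y. ennreal (exp (- \<bar>y\<bar> / b) / (2 * b)) \<partial>lborel)"
    unfolding laplace_def by (simp add: emeasure_density)
  also have "\<dots> \<le> (\<integral>\<^sup>+y. ennreal (e y) + ennreal (e (- y)) \<partial>lborel)"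
  proof (rule nn_integral_mono)
    fix y :: real
    have "exp (- \<bar>y\<bar> / b) / (2 * b) \<le> e y + e (- y)"
    proof (cases "y \<ge> 0")
      case True
      have "0 \<le> e (- y)" using b unfolding e_def exponential_density_def by auto
      moreover have "exp (- \<bar>y\<bar> / b) / (2 * b) \<le> e y"
        using b True unfolding e_def exponential_density_def by (auto simp: field_simps)
      ultimately show ?thesis by linarith
    next
      case False
      have "0 \<le> e y" using b unfolding e_def exponential_density_def by auto
      moreover have "exp (- \<bar>y\<bar> / b) / (2 * b) \<le> e (- y)"
        using b False unfolding e_def exponential_density_def by (auto simp: field_simps)
      ultimately show ?thesis by linarith
    qed
    moreover have "0 \<le> e y" "0 \<le> e (- y)" using b unfolding e_def exponential_density_def by auto
    ultimately show "ennreal (exp (- \<bar>y\<bar> / b) / (2 * b)) \<le> ennreal (e y) + ennreal (e (- y))"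
      by (simp add: ennreal_plus[symmetric] ennreal_leI del: ennreal_plus)
  qed
  also have "\<dots> = 2"
    by (subst nn_integral_add) (auto simp: e1 e2)
  finally show "emeasure (laplace b) (space (laplace b)) \<noteq> \<infinity>"
    using neq_top_trans[of "2::ennreal"] by simp
qed

lemma shiftok_measure:
  assumes "shiftok M g c" "B \<in> sets M"
  shows "emeasure M (g -` B \<inter> space M) \<le> c * emeasure M B"
proof -
  have gm: "g \<in> M \<rightarrow>\<^sub>M M" using assms(1) unfolding shiftok_def by auto
  have "emeasure M (g -` B \<inter> space M) = (\<integral>\<^sup>+x. indicator (g -` B \<inter> space M) x \<partial>M)"
    by (rule nn_integral_indicator[symmetric]) (rule measurable_sets[OF gm assms(2)])
  also have "\<dots> = (\<integral>\<^sup>+x. indicator B (g x) \<partial>M)"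
    by (rule nn_integral_cong) (auto simp: indicator_def)
  also have "\<dots> \<le> c * (\<integral>\<^sup>+x. indicator B x \<partial>M)"
    using assms unfolding shiftok_def using borel_measurable_indicator[OF assms(2)] by blast
  also have "\<dots> = c * emeasure M B" using assms(2) by simp
  finally show ?thesis .
qed

lemma pair_shift:
  assumes s1: "shiftok M1 g1 c1" and s2: "shiftok M2 g2 c2" and sf: "sigma_finite_measure M2"
  shows "shiftok (M1 \<Otimes>\<^sub>M M2) (\<lambda>(x, y). (g1 x, g2 y)) (c1 * c2)"
  unfolding shiftok_def
proof safe
  interpret M2: sigma_finite_measure M2 by fact
  have g1[measurable]: "g1 \<in> M1 \<rightarrow>\<^sub>M M1" and g2[measurable]: "g2 \<in> M2 \<rightarrow>\<^sub>M M2"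
    using s1 s2 unfolding shiftok_def by auto
  show "(\<lambda>(x, y). (g1 x, g2 y)) \<in> M1 \<Otimes>\<^sub>M M2 \<rightarrow>\<^sub>M M1 \<Otimes>\<^sub>M M2" by measurable
  fix h :: "_ \<Rightarrow> ennreal" assume h[measurable]: "h \<in> borel_measurable (M1 \<Otimes>\<^sub>M M2)"
  define K where "K x = (\<integral>\<^sup>+y. h (x, y) \<partial>M2)" for x
  have K[measurable]: "K \<in> borel_measurable M1"
    unfolding K_def by (rule M2.borel_measurable_nn_integral_fst) fact
  have "(\<integral>\<^sup>+ z. h (case z of (x, y) \<Rightarrow> (g1 x, g2 y)) \<partial>(M1 \<Otimes>\<^sub>M M2))
      = (\<integral>\<^sup>+x. \<integral>\<^sup>+y. h (g1 x, g2 y) \<partial>M2 \<partial>M1)"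
  proof -
    have gm: "(\<lambda>(x, y). (g1 x, g2 y)) \<in> M1 \<Otimes>\<^sub>M M2 \<rightarrow>\<^sub>M M1 \<Otimes>\<^sub>M M2" by measurable
    have hm: "(\<lambda>z. h (case z of (x, y) \<Rightarrow> (g1 x, g2 y))) \<in> borel_measurable (M1 \<Otimes>\<^sub>M M2)"
      using measurable_comp[OF gm h] by (simp add: comp_def)
    show ?thesis by (subst M2.nn_integral_fst[symmetric]) (simp_all add: hm)
  qed
  also have "\<dots> \<le> (\<integral>\<^sup>+x. c2 * K (g1 x) \<partial>M1)"
  proof (rule nn_integral_mono_AE, rule AE_I2)
    fix x assume x: "x \<in> space M1"
    have "(\<lambda>y. h (g1 x, y)) \<in> borel_measurable M2"
      using x measurable_space[OF g1 x] by measurable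
    then show "(\<integral>\<^sup>+y. h (g1 x, g2 y) \<partial>M2) \<le> c2 * K (g1 x)"
      using s2 unfolding shiftok_def K_def by auto
  qed
  also have "\<dots> = c2 * (\<integral>\<^sup>+x. K (g1 x) \<partial>M1)"
    by (rule nn_integral_cmult) measurable
  also have "\<dots> \<le> c2 * (c1 * (\<integral>\<^sup>+x. K x \<partial>M1))"
    using s1 K unfolding shiftok_def by (auto intro!: mult_left_mono)
  also have "(\<integral>\<^sup>+x. K x \<partial>M1) = (\<integral>\<^sup>+z. h z \<partial>(M1 \<Otimes>\<^sub>M M2))"
    unfolding K_def by (rule M2.nn_integral_fst) fact
  finally show "(\<integral>\<^sup>+ z. h (case z of (x, y) \<Rightarrow> (g1 x, g2 y)) \<partial>(M1 \<Otimes>\<^sub>M M2))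
      \<le> c1 * c2 * (\<integral>\<^sup>+z. h z \<partial>(M1 \<Otimes>\<^sub>M M2))"
    by (simp add: mult_ac)
qed


lemma pim_shift:
  fixes I :: "nat set"
  assumes b: "b > 0" and fin: "finite I"
  shows "shiftok (PiM I (\<lambda>_. laplace b)) (\<lambda>x. restrict (\<lambda>i. x i + a i) I)
           (\<Prod>i\<in>I. ennreal (exp (\<bar>a i\<bar> / b)))"
  using fin
proof (induction I rule: finite_induct)
  case empty
  show ?case unfolding shiftok_def
  proof safe
    show "(\<lambda>x. restrict (\<lambda>i. x i + a i) {}) \<in> PiM {} (\<lambda>_. laplace b) \<rightarrow>\<^sub>M PiM {} (\<lambda>_. laplace b)"
      by measurable
    fix h :: "_ \<Rightarrow> ennreal"
    show "(\<integral>\<^sup>+x. h (restrict (\<lambda>i. x i + a i) {}) \<partial>PiM {} (\<lambda>_. laplace b))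
        \<le> (\<Prod>i\<in>{}. ennreal (exp (\<bar>a i\<bar> / b))) * (\<integral>\<^sup>+x. h x \<partial>PiM {} (\<lambda>_. laplace b))"
    proof -
      have "(\<integral>\<^sup>+x. h (restrict (\<lambda>i. x i + a i) {}) \<partial>PiM {} (\<lambda>_. laplace b)) = (\<integral>\<^sup>+x. h x \<partial>PiM {} (\<lambda>_. laplace b))"
        by (rule nn_integral_cong) (auto simp: space_PiM restrict_def)
      then show ?thesis by simp
    qed
  qed
next
  case (insert i I)
  interpret P: product_sigma_finite "\<lambda>_::nat. laplace b"
    unfolding product_sigma_finite_def
    using laplace_finite[OF b] by (auto intro: finite_measure.sigma_finite_measure)
  let ?M = "\<lambda>_::nat. laplace b"
  let ?G = "\<lambda>x. restrict (\<lambda>i. x i + a i) I"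
  let ?G' = "\<lambda>x. restrict (\<lambda>j. x j + a j) (insert i I)"
  have GI: "?G \<in> PiM I ?M \<rightarrow>\<^sub>M PiM I ?M"
    using insert.IH unfolding shiftok_def by auto
  have cI: "\<And>h. h \<in> borel_measurable (PiM I ?M) \<Longrightarrow> (\<integral>\<^sup>+x. h (?G x) \<partial>PiM I ?M) \<le> (\<Prod>i\<in>I. ennreal (exp (\<bar>a i\<bar> / b))) * (\<integral>\<^sup>+x. h x \<partial>PiM I ?M)"
    using insert.IH unfolding shiftok_def by auto
  have ci: "\<And>h. h \<in> borel_measurable borel \<Longrightarrow> (\<integral>\<^sup>+y. h (y + a i) \<partial>laplace b) \<le> ennreal (exp (\<bar>a i\<bar> / b)) * (\<integral>\<^sup>+y. h y \<partial>laplace b)"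
    using laplace_shift[OF b, of "a i"] unfolding shiftok_def
    by (auto simp: measurable_cong_sets[OF sets_laplace refl])
  have G'm: "?G' \<in> PiM (insert i I) ?M \<rightarrow>\<^sub>M PiM (insert i I) ?M" by measurable
  show ?case unfolding shiftok_def
  proof safe
    show "?G' \<in> PiM (insert i I) ?M \<rightarrow>\<^sub>M PiM (insert i I) ?M" by (rule G'm)
    fix h :: "_ \<Rightarrow> ennreal" assume h[measurable]: "h \<in> borel_measurable (PiM (insert i I) ?M)"
    define K where "K x = (\<integral>\<^sup>+y. h (x(i := y)) \<partial>laplace b)" for x
    have K[measurable]: "K \<in> borel_measurable (PiM I ?M)"
    proof -
      have sf: "sigma_finite_measure (laplace b)"
        using laplace_finite[OF b] by (auto intro: finite_measure.sigma_finite_measure)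
      have "(\<lambda>(x, y). h (x(i := y))) \<in> borel_measurable (PiM I ?M \<Otimes>\<^sub>M laplace b)"
        using measurable_comp[OF measurable_add_dim[where I=I and M="?M" and i=i] h] by (simp add: comp_def case_prod_beta)
      from sigma_finite_measure.borel_measurable_nn_integral_fst[OF sf this] show ?thesis unfolding K_def by simp
    qed
    have hG: "(\<lambda>x. h (?G' x)) \<in> borel_measurable (PiM (insert i I) ?M)"
      using measurable_comp[OF G'm h] by (simp add: comp_def)
    have "(\<integral>\<^sup>+x. h (?G' x) \<partial>PiM (insert i I) ?M)
        = (\<integral>\<^sup>+x. \<integral>\<^sup>+y. h (?G' (x(i := y))) \<partial>laplace b \<partial>PiM I ?M)"
      by (rule P.product_nn_integral_insert[OF insert.hyps hG])
    also have "\<dots> = (\<integral>\<^sup>+x. \<integral>\<^sup>+y. h ((?G x)(i := y + a i)) \<partial>laplace b \<partial>PiM I ?M)"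
    proof (rule nn_integral_cong, rule nn_integral_cong)
      fix x y assume "x \<in> space (PiM I ?M)"
      have "?G' (x(i := y)) = (?G x)(i := y + a i)"
        using insert.hyps by (auto simp: fun_eq_iff restrict_def)
      then show "h (?G' (x(i := y))) = h ((?G x)(i := y + a i))" by simp
    qed
    also have "\<dots> \<le> (\<integral>\<^sup>+x. ennreal (exp (\<bar>a i\<bar> / b)) * K (?G x) \<partial>PiM I ?M)"
    proof (rule nn_integral_mono)
      fix x assume x: "x \<in> space (PiM I ?M)"
      have Gx: "?G x \<in> space (PiM I ?M)" using measurable_space[OF GI x] .
      have "(\<lambda>y. h ((?G x)(i := y))) \<in> borel_measurable borel"
        using measurable_comp[OF measurable_component_update[OF Gx insert.hyps(2)] h]
        by (simp add: comp_def measurable_cong_sets[OF sets_laplace refl])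
      from ci[OF this] show "(\<integral>\<^sup>+y. h ((?G x)(i := y + a i)) \<partial>laplace b) \<le> ennreal (exp (\<bar>a i\<bar> / b)) * K (?G x)"
        unfolding K_def .
    qed
    also have "\<dots> = ennreal (exp (\<bar>a i\<bar> / b)) * (\<integral>\<^sup>+x. K (?G x) \<partial>PiM I ?M)"
      using measurable_comp[OF GI K] by (intro nn_integral_cmult) (simp add: comp_def)
    also have "\<dots> \<le> ennreal (exp (\<bar>a i\<bar> / b)) * ((\<Prod>i\<in>I. ennreal (exp (\<bar>a i\<bar> / b))) * (\<integral>\<^sup>+x. K x \<partial>PiM I ?M))"
      by (intro mult_left_mono cI K) simp
    also have "(\<integral>\<^sup>+x. K x \<partial>PiM I ?M) = (\<integral>\<^sup>+x. h x \<partial>PiM (insert i I) ?M)"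
      unfolding K_def by (rule P.product_nn_integral_insert[OF insert.hyps h, symmetric])
    finally show "(\<integral>\<^sup>+x. h (?G' x) \<partial>PiM (insert i I) ?M)
        \<le> (\<Prod>i\<in>insert i I. ennreal (exp (\<bar>a i\<bar> / b))) * (\<integral>\<^sup>+x. h x \<partial>PiM (insert i I) ?M)"
      by (simp only: prod.insert[OF insert.hyps] mult.assoc)
  qed
qed


lemma pim_finite:
  assumes b: "b > 0"
  shows "finite_measure (PiM {..<(n::nat)} (\<lambda>_. laplace b))"
proof (rule finite_measureI)
  interpret L: finite_measure "laplace b" using laplace_finite[OF b] .
  interpret P: product_sigma_finite "\<lambda>_::nat. laplace b"
    unfolding product_sigma_finite_def
    using laplace_finite[OF b] by (auto intro: finite_measure.sigma_finite_measure)
  have "emeasure (PiM {..<n} (\<lambda>_. laplace b)) (space (PiM {..<n} (\<lambda>_. laplace b)))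
       = (\<Prod>i\<in>{..<n}. emeasure (laplace b) UNIV)"
    unfolding space_PiM by (subst P.emeasure_PiM) auto
  then show "emeasure (PiM {..<n} (\<lambda>_. laplace b)) (space (PiM {..<n} (\<lambda>_. laplace b))) \<noteq> \<infinity>"
    using L.emeasure_finite[of UNIV] by (simp add: power_eq_top_ennreal)
qed

lemma noise_finite:
  assumes "lam > 0" "t > 0"
  shows "finite_measure (svt_noise lam t n)"
  unfolding svt_noise_def
  by (rule finite_measure_pair_measure) (use assms in \<open>auto intro: pim_finite laplace_finite\<close>)

lemma noise_pred_sets:
  assumes "i < n"
  shows "{\<omega> \<in> space (svt_noise lam t n). th + fst \<omega> < c + snd \<omega> i} \<in> sets (svt_noise lam t n)"
proof -
  have [measurable]: "i \<in> {..<n}" using assms by simp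
  show ?thesis unfolding svt_noise_def by measurable
qed

lemma bits_sets:
  assumes "\<And>i. i < n \<Longrightarrow> {\<omega> \<in> space M. P i \<omega>} \<in> sets M"
  shows "{\<omega> \<in> space M. G (map (\<lambda>i. P i \<omega>) [0..<n]) = out} \<in> sets M"
proof -
  let ?S = "{bs :: bool list. length bs = n \<and> G bs = out}"
  have fin: "finite ?S"
    using finite_lists_length_eq[of "UNIV :: bool set" n] by (rule rev_finite_subset) auto
  have eq: "{\<omega> \<in> space M. G (map (\<lambda>i. P i \<omega>) [0..<n]) = out}
      = {\<omega> \<in> space M. \<exists>bs\<in>?S. \<forall>i\<in>{..<n}. P i \<omega> = bs ! i}"
  proof -
    have "G (map (\<lambda>i. P i \<omega>) [0..<n]) = out \<longleftrightarrow> (\<exists>bs\<in>?S. \<forall>i\<in>{..<n}. P i \<omega> = bs ! i)" for \<omega>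
    proof
      assume "G (map (\<lambda>i. P i \<omega>) [0..<n]) = out"
      then show "\<exists>bs\<in>?S. \<forall>i\<in>{..<n}. P i \<omega> = bs ! i"
        by (intro bexI[of _ "map (\<lambda>i. P i \<omega>) [0..<n]"]) auto
    next
      assume "\<exists>bs\<in>?S. \<forall>i\<in>{..<n}. P i \<omega> = bs ! i"
      then obtain bs where bs: "length bs = n" "G bs = out" "\<forall>i\<in>{..<n}. P i \<omega> = bs ! i" by auto
      moreover have "map (\<lambda>i. P i \<omega>) [0..<n] = bs"
        using bs by (intro nth_equalityI) auto
      ultimately show "G (map (\<lambda>i. P i \<omega>) [0..<n]) = out" by simp
    qed
    then show ?thesis by auto
  qed
  have one: "{\<omega> \<in> space M. P i \<omega> = c} \<in> sets M" if "i < n" for i c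
  proof (cases c)
    case True then show ?thesis using assms[OF that] by simp
  next
    case False
    have "{\<omega> \<in> space M. P i \<omega> = c} = space M - {\<omega> \<in> space M. P i \<omega>}" using False by auto
    then show ?thesis using assms[OF that] by auto
  qed
  show ?thesis unfolding eq
    by (intro sets.sets_Collect_finite_Ex sets.sets_Collect_finite_All fin one) auto
qed


lemma E_sets:
  "{\<omega> \<in> space (svt_noise lam t n). svt_run t (\<theta> + fst \<omega>) (map (\<lambda>i. q i + snd \<omega> i) [0..<n]) = out}
     \<in> sets (svt_noise lam t n)"
proof -
  have "{\<omega> \<in> space (svt_noise lam t n). svt_b t (map (\<lambda>i. \<theta> + fst \<omega> < q i + snd \<omega> i) [0..<n]) = out}
     \<in> sets (svt_noise lam t n)"
    by (rule bits_sets) (rule noise_pred_sets)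
  then show ?thesis by (simp add: svt_run_b comp_def)
qed

lemma core:
  fixes q q' :: "nat \<Rightarrow> real" and s \<theta> lam :: real and t n :: nat
  assumes lam: "lam > 0" and t: "t > 0" and s: "0 \<le> s"
    and qq: "\<And>i. i < n \<Longrightarrow> q i + s - 1 \<le> q' i \<and> q' i \<le> q i + s"
  shows "measure (svt_noise lam t n) {\<omega> \<in> space (svt_noise lam t n). svt_run t (\<theta> + fst \<omega>) (map (\<lambda>i. q i + snd \<omega> i) [0..<n]) = out}
       \<le> exp ((s + 1) / lam) * measure (svt_noise lam t n) {\<omega> \<in> space (svt_noise lam t n). svt_run t (\<theta> + fst \<omega>) (map (\<lambda>i. q' i + snd \<omega> i) [0..<n]) = out}"
proof -
  define N where "N = svt_noise lam t n"
  define E1 where "E1 = {\<omega> \<in> space N. svt_run t (\<theta> + fst \<omega>) (map (\<lambda>i. q i + snd \<omega> i) [0..<n]) = out}"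
  define E2 where "E2 = {\<omega> \<in> space N. svt_run t (\<theta> + fst \<omega>) (map (\<lambda>i. q' i + snd \<omega> i) [0..<n]) = out}"
  have E1s: "E1 \<in> sets N" unfolding E1_def N_def by (rule E_sets)
  have E2s: "E2 \<in> sets N" unfolding E2_def N_def by (rule E_sets)
  interpret N: finite_measure N unfolding N_def using noise_finite lam t by blast
  have "measure N E1 \<le> exp ((s + 1) / lam) * measure N E2"
  proof (cases "E1 = {}")
    case True then show ?thesis by simp
  next
    case False
    then obtain \<omega>0 where \<omega>0: "\<omega>0 \<in> E1" by auto
    define bs0 where "bs0 = map (\<lambda>i. \<theta> + fst \<omega>0 < q i + snd \<omega>0 i) [0..<n]"
    have out0: "svt_b t bs0 = out" using \<omega>0 unfolding E1_def bs0_def by (simp add: svt_run_b comp_def)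
    have cnt: "length (filter id out) \<le> t" using svt_b_count[of t bs0] t out0 by simp
    have lo: "length out \<le> n" using svt_b_prefix[OF out0] unfolding bs0_def by simp
    define a where "a i = (if i < length out \<and> out ! i then 1 else 0 :: real)" for i
    define \<phi> where "\<phi> = (\<lambda>(x :: real, y :: nat \<Rightarrow> real). (x + s, restrict (\<lambda>i. y i + a i) {..<n}))"
    define C where "C = ennreal (exp (\<bar>s\<bar> / lam)) * (\<Prod>i\<in>{..<n}. ennreal (exp (\<bar>a i\<bar> / (real t * lam))))"
    have sh: "shiftok N \<phi> C"
      unfolding N_def svt_noise_def \<phi>_def C_def
    proof (rule pair_shift[OF laplace_shift[OF lam] pim_shift])
      show "0 < real t * lam" using t lam by simp
      show "sigma_finite_measure (PiM {..<n} (\<lambda>_. laplace (real t * lam)))"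
        using pim_finite[of "real t * lam" n] t lam by (auto intro: finite_measure.sigma_finite_measure)
    qed simp
    have \<phi>m: "\<phi> \<in> N \<rightarrow>\<^sub>M N" using sh unfolding shiftok_def by auto
    have sub: "E1 \<subseteq> \<phi> -` E2 \<inter> space N"
    proof
      fix \<omega> assume \<omega>: "\<omega> \<in> E1"
      obtain z y where zy: "\<omega> = (z, y)" by (cases \<omega>)
      have sp: "\<omega> \<in> space N" using \<omega> unfolding E1_def by auto
      define bs where "bs = map (\<lambda>i. \<theta> + z < q i + y i) [0..<n]"
      define bs' where "bs' = map (\<lambda>i. \<theta> + (z + s) < q' i + (y i + a i)) [0..<n]"
      have o1: "svt_b t bs = out" using \<omega> zy unfolding E1_def bs_def by (simp add: svt_run_b comp_def)
      have "svt_b t bs' = svt_b t bs"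
      proof (rule svt_b_agree)
        show "length bs' = length bs" unfolding bs_def bs'_def by simp
        show "\<forall>i<length (svt_b t bs). bs' ! i = bs ! i"
        proof (intro allI impI)
          fix i assume i: "i < length (svt_b t bs)"
          have io: "i < length out" and oi: "out ! i = bs ! i" using svt_b_prefix[OF o1] i o1 by auto
          have inn: "i < n" using io lo by simp
          have bi: "bs ! i = (\<theta> + z < q i + y i)" and bi': "bs' ! i = (\<theta> + (z + s) < q' i + (y i + a i))"
            using inn unfolding bs_def bs'_def by auto
          have "bs' ! i = bs ! i" if "out ! i"
          proof -
            have "a i = 1" using io that unfolding a_def by simp
            then show ?thesis using that oi bi bi' qq[OF inn] by auto
          qed
          moreover have "bs' ! i = bs ! i" if "\<not> out ! i"
          proof -
            have "a i = 0" using that unfolding a_def by simp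
            then show ?thesis using that oi bi bi' qq[OF inn] by auto
          qed
          ultimately show "bs' ! i = bs ! i" by blast
        qed
      qed
      then have "svt_b t bs' = out" using o1 by simp
      moreover have "\<phi> \<omega> \<in> space N" using measurable_space[OF \<phi>m sp] .
      moreover have "\<phi> \<omega> = (z + s, restrict (\<lambda>i. y i + a i) {..<n})" unfolding \<phi>_def zy by simp
      then have "map (\<lambda>i. \<theta> + fst (\<phi> \<omega>) < q' i + snd (\<phi> \<omega>) i) [0..<n] = bs'"
        unfolding bs'_def by (intro map_cong) auto
      ultimately have "\<phi> \<omega> \<in> E2" unfolding E2_def by (simp add: svt_run_b comp_def)
      then show "\<omega> \<in> \<phi> -` E2 \<inter> space N" using sp by simp
    qed
    have C_le: "C \<le> ennreal (exp ((s + 1) / lam))"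
    proof -
      have suma: "(\<Sum>i\<in>{..<n}. a i) \<le> real t"
      proof -
        have "(\<Sum>i\<in>{..<n}. a i) = real (card {i\<in>{..<n}. i < length out \<and> out ! i})"
          unfolding a_def by (simp add: sum.If_cases Int_def)
        also have "{i\<in>{..<n}. i < length out \<and> out ! i} = {i. i < length out \<and> id (out ! i)}"
          using lo by auto
        also have "card \<dots> = length (filter id out)" by (simp add: length_filter_conv_card)
        finally show ?thesis using cnt by simp
      qed
      have "(\<Prod>i\<in>{..<n}. ennreal (exp (\<bar>a i\<bar> / (real t * lam))))
          = ennreal (exp (\<Sum>i\<in>{..<n}. a i / (real t * lam)))"
        by (simp add: prod_ennreal exp_sum a_def)
      also have "(\<Sum>i\<in>{..<n}. a i / (real t * lam)) = (\<Sum>i\<in>{..<n}. a i) / (real t * lam)"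
        by (simp add: sum_divide_distrib)
      also have "\<dots> \<le> real t / (real t * lam)"
        using suma t lam by (intro divide_right_mono) auto
      also have "\<dots> = 1 / lam" using t by simp
      finally have P: "(\<Prod>i\<in>{..<n}. ennreal (exp (\<bar>a i\<bar> / (real t * lam)))) \<le> ennreal (exp (1 / lam))"
        by (simp add: ennreal_leI)
      have "C \<le> ennreal (exp (s / lam)) * ennreal (exp (1 / lam))"
        unfolding C_def using s P by (auto intro: mult_left_mono)
      also have "\<dots> = ennreal (exp ((s + 1) / lam))"
        by (simp add: ennreal_mult[symmetric] exp_add[symmetric] add_divide_distrib)
      finally show ?thesis .
    qed
    have "emeasure N E1 \<le> emeasure N (\<phi> -` E2 \<inter> space N)"
      using sub measurable_sets[OF \<phi>m E2s] by (rule emeasure_mono)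
    also have "\<dots> \<le> C * emeasure N E2" by (rule shiftok_measure[OF sh E2s])
    also have "\<dots> \<le> ennreal (exp ((s + 1) / lam)) * emeasure N E2" by (rule mult_right_mono[OF C_le]) simp
    finally have "ennreal (measure N E1) \<le> ennreal (exp ((s + 1) / lam) * measure N E2)"
      by (simp add: N.emeasure_eq_measure ennreal_mult)
    then show ?thesis by (simp add: ennreal_le_iff)
  qed
  then show ?thesis unfolding N_def E1_def E2_def .
qed


lemma count_query_add: "count_query P (add_mset x D) = count_query P D + (if P x then 1 else 0)"
  unfolding count_query_def by simp

theorem lemma6:
  fixes \<epsilon> \<theta> lam :: real and t :: nat and Q :: "('a \<Rightarrow> bool) list"
  assumes "\<epsilon> > 0" and "t > 0" and "lam \<ge> 2 / \<epsilon>"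
  shows "differentially_private \<epsilon> (\<lambda>D. improved_svt_prob D Q \<theta> lam t) neighboring"
  unfolding differentially_private_def
proof (intro allI impI)
  fix D D' :: "'a multiset" and out
  assume nb: "neighboring D D'"
  have lam: "lam > 0" using assms(1,3) by (smt (verit) divide_pos_pos)
  have le: "2 / lam \<le> \<epsilon>" using assms(1,3) lam by (simp add: field_simps)
  let ?n = "length Q"
  let ?N = "svt_noise lam t ?n"
  let ?E = "\<lambda>q. measure ?N {\<omega> \<in> space ?N. svt_run t (\<theta> + fst \<omega>) (map (\<lambda>i. q i + snd \<omega> i) [0..<?n]) = out}"
  have P: "improved_svt_prob E Q \<theta> lam t out = ?E (\<lambda>i. real (count_query (Q ! i) E))" for E
    unfolding improved_svt_prob_def by simp
  have nn: "0 \<le> ?E q" for q by simp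
  from nb show "improved_svt_prob D Q \<theta> lam t out \<le> exp \<epsilon> * improved_svt_prob D' Q \<theta> lam t out"
    unfolding neighboring_def
  proof (elim disjE exE)
    fix x assume D: "D = add_mset x D'"
    have "?E (\<lambda>i. real (count_query (Q ! i) D)) \<le> exp ((0 + 1) / lam) * ?E (\<lambda>i. real (count_query (Q ! i) D'))"
      by (rule core[OF lam assms(2)]) (auto simp: D count_query_add)
    also have "\<dots> \<le> exp \<epsilon> * ?E (\<lambda>i. real (count_query (Q ! i) D'))"
    proof (rule mult_right_mono[OF _ nn])
      have "1 / lam \<le> 2 / lam" using lam by (simp add: divide_right_mono)
      then show "exp ((0 + 1) / lam) \<le> exp \<epsilon>" using le by simp
    qed
    finally show ?thesis unfolding P .
  next
    fix x assume D': "D' = add_mset x D"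
    have "?E (\<lambda>i. real (count_query (Q ! i) D)) \<le> exp ((1 + 1) / lam) * ?E (\<lambda>i. real (count_query (Q ! i) D'))"
      by (rule core[OF lam assms(2)]) (auto simp: D' count_query_add)
    also have "\<dots> \<le> exp \<epsilon> * ?E (\<lambda>i. real (count_query (Q ! i) D'))"
      by (rule mult_right_mono[OF _ nn]) (use le in simp)
    finally show ?thesis unfolding P .
  qed
qed


end
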